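(* Let $m,n$ be natural numbers. If the $n$-th term $G(n,m)$ of the Goodstein sequence $G(m)$ is $0$, then $n=2(2n_2+1)$ for some natural number $n_2$ such that the hereditary representation of $G(n_2-1,m)$ in base $n_2$ is $2\cdot n_2^{1}+0\cdot n_2^{0}$.
   Context: For a natural number base $b>1$, the hereditary representation $m\langle b\rangle$ of $m$ is $\sum_{i=0}^{l} a_i b^{i}$ with $0\le a_i<b$, $a_l\ne0$, each exponent itself written in hereditary representation in base $b$, recursively. $m\langle b\rangle''$ is obtained by syntactically replacing every $b$ by $b+1$ in $m\langle b\rangle$. The Goodstein sequence $G(m)=\{m, m''-1, (m''-1)''-1,\dots\}$ starts from $m$ in base $2$; its $n$-th term is $G(n,m)$, with $G(1,m)=m$ in base $2$, $G(k,m)$ written in base $k+1$, and $G(k+1,m)=G(k,m)\langle k+1\rangle''-1$.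
   Formalization: m is at least 4, and n is the first index at which the Goodstein sequence reaches 0, that is, $G(k,m) \ne 0$ for every $1 \le k < n$. Apart from conventions, each condition added here is assumed in the paper as well or is needed for the statement above to hold. *)

theory Defs
  imports Main
begin

fun digits :: "nat \<Rightarrow> nat \<Rightarrow> nat list" where
  "digits b m = (if m = 0 \<or> b < 2 then [] else (m mod b) # digits b (m div b))"

lemma length_digits_le: "length (digits b m) \<le> m"
proof (induction b m rule: digits.induct)
  case (1 b m)
  show ?case
  proof (cases "m = 0 \<or> b < 2")
    case True then show ?thesis by simp
  next
    case False
    then have "m div b < m" by simp
    with 1 False show ?thesis by simp
  qed
qed

text \<open>Hereditary representation: a node is the list of pairs (a_i, exponent i in
hereditary representation), for i = 0..l.\<close>
datatype hrep = HSum "(nat \<times> hrep) list"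

function hrep_of :: "nat \<Rightarrow> nat \<Rightarrow> hrep" where
  "hrep_of b m = HSum (map (\<lambda>i. (digits b m ! i, hrep_of b i)) [0..<length (digits b m)])"
  by auto
termination
proof (relation "measure snd")
  show "wf (measure snd)" by simp
next
  fix b m i
  assume "i \<in> set [0..<length (digits b m)]"
  then have "i < length (digits b m)" by simp
  also have "\<dots> \<le> m" by (rule length_digits_le)
  finally show "((b, i), (b, m)) \<in> measure snd" by simp
qed

text \<open>Evaluate a hereditary representation with base c (syntactic replacement of b by c).\<close>
fun heval :: "nat \<Rightarrow> hrep \<Rightarrow> nat" where
  "heval c (HSum xs) = sum_list (map (\<lambda>(a, e). a * c ^ heval c e) xs)"

definition bump :: "nat \<Rightarrow> nat \<Rightarrow> nat" where
  "bump b m = heval (b + 1) (hrep_of b m)"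

text \<open>Goodstein sequence, 1-indexed: goodstein 1 m = m; G(k,m) is written in base k+1 and
G(k+1,m) = G(k,m)<k+1>'' - 1. Index 0 is junk (= m). Natural-number subtraction means
the sequence stays 0 once it reaches 0.\<close>
fun goodstein :: "nat \<Rightarrow> nat \<Rightarrow> nat" where
  "goodstein 0 m = m"
| "goodstein (Suc 0) m = m"
| "goodstein (Suc (Suc k)) m = bump (k + 2) (goodstein (Suc k) m) - 1"

end

theory Submission
  imports Defs
begin

declare hrep_of.simps[simp del]
declare digits.simps[simp del]

lemma digits_0[simp]: "digits b 0 = []"
  by (subst digits.simps) simp

lemma digits_pos: "m \<noteq> 0 \<Longrightarrow> 2 \<le> b \<Longrightarrow> digits b m = (m mod b) # digits b (m div b)"
  by (subst digits.simps) simp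

fun hor :: "nat \<Rightarrow> nat list \<Rightarrow> nat" where
  "hor c [] = 0"
| "hor c (d # ds) = d + c * hor c ds"

lemma hor_sum: "(\<Sum>i<length ds. ds ! i * c ^ i) = hor c ds"
proof (induction ds)
  case Nil then show ?case by simp
next
  case (Cons d ds)
  have "(\<Sum>i<length (d # ds). (d # ds) ! i * c ^ i) = d + (\<Sum>i<length ds. ds ! i * c ^ Suc i)"
    unfolding length_Cons sum.lessThan_Suc_shift by simp
  also have "(\<Sum>i<length ds. ds ! i * c ^ Suc i) = c * (\<Sum>i<length ds. ds ! i * c ^ i)"
    by (simp add: sum_distrib_left mult.assoc mult.left_commute)
  finally show ?case using Cons by simp
qed

lemma bump_eq: "bump b v = (\<Sum>i<length (digits b v). digits b v ! i * (b+1) ^ (bump b i))"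
  unfolding bump_def
  apply (subst hrep_of.simps)
  apply (simp add: comp_def sum_list_sum_nth atLeast0LessThan)
  done

lemma hor_digits: "2 \<le> b \<Longrightarrow> hor b (digits b v) = v"
proof (induction b v rule: digits.induct)
  case (1 b m)
  show ?case
  proof (cases "m = 0")
    case True then show ?thesis by simp
  next
    case False
    then have "digits b m = (m mod b) # digits b (m div b)" using 1(2) by (simp add: digits_pos)
    then show ?thesis using 1 False by simp
  qed
qed

lemma hor_mono: "b \<le> c \<Longrightarrow> hor b ds \<le> hor c ds"
  by (induction ds) (auto intro: add_mono mult_le_mono)

lemma hor_pow: "2 \<le> b \<Longrightarrow> 1 \<le> c \<Longrightarrow> b ^ e \<le> v \<Longrightarrow> c ^ e \<le> hor c (digits b v)"
proof (induction b v arbitrary: e rule: digits.induct)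
  case (1 b m)
  have "0 < b ^ e" using 1(2) by simp
  then have m0: "m \<noteq> 0" using 1(4) by linarith
  then have d: "digits b m = (m mod b) # digits b (m div b)" using 1(2) by (simp add: digits_pos)
  show ?case
  proof (cases e)
    case 0
    show ?thesis
    proof (cases "m div b = 0")
      case True
      then have "m mod b = m" by (metis add_0 div_mult_mod_eq mult_zero_left)
      then show ?thesis using d 0 m0 by simp
    next
      case False
      then have "1 \<le> hor c (digits b (m div b))"
        using 1(1)[of "0"] m0 1(2,3) by simp
      then have h: "1 * 1 \<le> c * hor c (digits b (m div b))" using 1(3) by (metis mult_le_mono)
      show ?thesis using h by (simp only: d 0 power_0 hor.simps)
    qed
  next
    case (Suc e')
    have "b ^ e' * b \<le> m" using 1(4) Suc by (simp add: mult.commute)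
    then have "b ^ e' \<le> m div b" using 1(2) by (simp add: less_eq_div_iff_mult_less_eq)
    then have "c ^ e' \<le> hor c (digits b (m div b))" using 1(1) m0 1(2,3) by simp
    then have "c ^ e \<le> c * hor c (digits b (m div b))" using Suc by simp
    then show ?thesis using d by simp
  qed
qed

lemma bump_ge_hor:
  assumes "\<forall>i<length (digits b v). i \<le> bump b i" and "1 \<le> b"
  shows "hor (b+1) (digits b v) \<le> bump b v"
proof -
  have "hor (b+1) (digits b v) = (\<Sum>i<length (digits b v). digits b v ! i * (b+1) ^ i)"
    by (simp add: hor_sum)
  also have "\<dots> \<le> (\<Sum>i<length (digits b v). digits b v ! i * (b+1) ^ (bump b i))"
  proof (rule sum_mono)
    fix i assume "i \<in> {..<length (digits b v)}"
    then have "i \<le> bump b i" using assms by simp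
    then show "digits b v ! i * (b+1) ^ i \<le> digits b v ! i * (b+1) ^ (bump b i)"
      by (intro mult_le_mono2 power_increasing) simp_all
  qed
  also have "\<dots> = bump b v" by (rule bump_eq[symmetric])
  finally show ?thesis .
qed

lemma bump_ge: "2 \<le> b \<Longrightarrow> v \<le> bump b v"
proof (induction v rule: less_induct)
  case (less v)
  have "\<forall>i<length (digits b v). i \<le> bump b i"
  proof (intro allI impI)
    fix i assume "i < length (digits b v)"
    then have "i < v" using length_digits_le[of b v] by simp
    then show "i \<le> bump b i" using less by simp
  qed
  then have "hor (b+1) (digits b v) \<le> bump b v" using bump_ge_hor less(2) by simp
  moreover have "v \<le> hor (b+1) (digits b v)"
    using hor_mono[of b "b+1" "digits b v"] hor_digits[of b v] less(2) by simp
  ultimately show ?case by simp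
qed

lemma lemA: "2 \<le> b \<Longrightarrow> b^2 \<le> v \<Longrightarrow> (b+1)^2 \<le> bump b v"
proof -
  assume b: "2 \<le> b" and v: "b^2 \<le> v"
  have "\<forall>i<length (digits b v). i \<le> bump b i" using bump_ge b by simp
  then have "hor (b+1) (digits b v) \<le> bump b v" using bump_ge_hor b by simp
  moreover have "(b+1)^2 \<le> hor (b+1) (digits b v)" using hor_pow[of b "b+1" 2 v] b v by simp
  ultimately show ?thesis by simp
qed

lemma digits_two:
  assumes "2 \<le> b" "0 < a" "a < b" "c < b"
  shows "digits b (a*b+c) = [c, a]"
proof -
  have 1: "(a*b+c) mod b = c" "(a*b+c) div b = a" using assms by auto
  have "digits b (a*b+c) = c # digits b a" using assms 1
    by (subst digits_pos) simp_all
  also have "digits b a = [a]" using assms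
    by (simp add: digits_pos)
  finally show ?thesis .
qed

lemma bump0: "bump b 0 = 0"
  by (subst bump_eq) simp

lemma bump1: "2 \<le> b \<Longrightarrow> bump b 1 = 1"
proof -
  assume "2 \<le> b"
  then have "digits b 1 = [1]" by (simp add: digits_pos)
  then show ?thesis by (subst bump_eq) (simp add: bump0)
qed

lemma lemB:
  assumes "2 \<le> b" "a < b" "c < b"
  shows "bump b (a*b+c) = a*(b+1)+c"
proof (cases "a = 0")
  case True
  show ?thesis
  proof (cases "c = 0")
    case True then show ?thesis using \<open>a = 0\<close> by (simp add: bump0)
  next
    case False
    then have "digits b c = [c]" using assms by (simp add: digits_pos)
    then show ?thesis using \<open>a = 0\<close> by (subst bump_eq) (simp add: bump0)
  qed
next
  case False
  then have "digits b (a*b+c) = [c, a]" using digits_two assms by simp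
  moreover have "bump b (Suc 0) = 1" using bump1 assms by simp
  ultimately show ?thesis using assms by (subst bump_eq) (simp add: bump0 lessThan_Suc)
qed

lemma gstep: "1 \<le> k \<Longrightarrow> goodstein (k+1) m = bump (k+1) (goodstein k m) - 1"
  by (cases k) auto

declare goodstein.simps[simp del]

lemma gzero: "1 \<le> k \<Longrightarrow> goodstein k m = 0 \<Longrightarrow> goodstein (k+d) m = 0"
proof (induction d)
  case 0 then show ?case by simp
next
  case (Suc d)
  have "goodstein (k+d+1) m = bump (k+d+1) (goodstein (k+d) m) - 1" using gstep[of "k+d" m] Suc by simp
  then show ?case using Suc by (simp add: bump0)
qed

lemma phase1:
  assumes "1 \<le> k" "goodstein k m = a*(k+1)+c" "1 \<le> a" "a < k+1" "c < k+1"
  shows "d \<le> c \<Longrightarrow> goodstein (k+d) m = a*(k+1+d) + (c-d)"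
proof (induction d)
  case 0 then show ?case using assms by simp
next
  case (Suc d)
  have "goodstein (k+Suc d) m = bump (k+d+1) (goodstein (k+d) m) - 1"
    using gstep[of "k+d" m] assms by simp
  also have "\<dots> = bump (k+d+1) (a*(k+d+1) + (c-d)) - 1" using Suc by (simp add: add.commute add.left_commute)
  also have "\<dots> = a*(k+d+2) + (c-d) - 1" using lemB[of "k+d+1" a "c-d"] assms by simp
  also have "\<dots> = a*(k+1+Suc d) + (c - Suc d)" using Suc by simp
  finally show ?case .
qed

lemma drop:
  assumes "1 \<le> k" "goodstein k m = a*(k+1)" "1 \<le> a" "a < k+1"
  shows "goodstein (k+1) m = (a-1)*(k+2) + (k+1)"
proof -
  have "goodstein (k+1) m = bump (k+1) (a*(k+1)+0) - 1" using gstep assms by simp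
  also have "\<dots> = a*(k+2) - 1" using lemB[of "k+1" a 0] assms by simp
  also have "\<dots> = (a-1)*(k+2) + (k+1)" using assms(3)
    by (cases a) auto
  finally show ?thesis .
qed

lemma phase2:
  "\<forall>k. 2 \<le> k \<longrightarrow> goodstein k m = a*(k+1) \<longrightarrow> 2 \<le> a \<longrightarrow> a < k+1 \<longrightarrow>
     (\<exists>j\<ge>k. goodstein j m = 2*(j+1))"
proof (induction a)
  case 0 then show ?case by simp
next
  case (Suc a)
  show ?case
  proof (intro allI impI)
    fix k assume k: "2 \<le> k" and g: "goodstein k m = Suc a*(k+1)" and a: "2 \<le> Suc a" and ak: "Suc a < k+1"
    show "\<exists>j\<ge>k. goodstein j m = 2*(j+1)"
    proof (cases "a = 1")
      case True then show ?thesis using g by (intro exI[of _ k]) simp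
    next
      case False
      have g1: "goodstein (k+1) m = a*(k+2) + (k+1)" using drop[of k m "Suc a"] k g ak by simp
      have g2: "goodstein ((k+1)+(k+1)) m = a*((k+1)+1+(k+1)) + ((k+1)-(k+1))"
        using phase1[of "k+1" m a "k+1" "k+1"] g1 k ak False a by simp
      have e: "k+1+(k+1) = 2*k+2" by simp
      have g2': "goodstein (2*k+2) m = a*((2*k+2)+1)" using g2[unfolded e] by simp
      have p1: "2 \<le> 2*k+2" by simp
      have p2: "2 \<le> a" using False a by simp
      have p3: "a < 2*k+2+1" using ak by simp
      obtain j where "j \<ge> 2*k+2" "goodstein j m = 2*(j+1)"
        using Suc.IH[rule_format, OF p1 g2' p2 p3] by blast
      then show ?thesis by (intro exI[of _ j]) simp
    qed
  qed
qed

lemma phase3: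
  assumes "1 \<le> k" "goodstein k m = v" "v \<le> k"
  shows "t \<le> v \<Longrightarrow> goodstein (k+t) m = v - t"
proof (induction t)
  case 0 then show ?case using assms by simp
next
  case (Suc t)
  have "goodstein (k+Suc t) m = bump (k+t+1) (0*(k+t+1) + (v-t)) - 1"
    using gstep[of "k+t" m] assms Suc by simp
  also have "\<dots> = v - Suc t" using lemB[of "k+t+1" 0 "v-t"] assms Suc by simp
  finally show ?case .
qed

theorem lemma7:
  fixes m n :: nat
  assumes "4 \<le> m"
    and "1 \<le> n"
    and "goodstein n m = 0"
    and "\<forall>k. 1 \<le> k \<and> k < n \<longrightarrow> goodstein k m \<noteq> 0"
  shows "\<exists>n2. 2 \<le> n2 \<and> n = 2 * (2 * n2 + 1) \<and>
           hrep_of n2 (goodstein (n2 - 1) m) = HSum [(0, hrep_of n2 0), (2, hrep_of n2 1)]"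
proof -
  define P where "P k \<longleftrightarrow> (k+1)^2 \<le> goodstein k m" for k
  have P1: "P 1" using assms(1) by (simp add: P_def goodstein.simps power2_eq_square)
  have Pn: "\<not> P n" using assms(3) by (simp add: P_def)
  have "\<exists>k. 1 \<le> k \<and> P k \<and> \<not> P (k+1)"
  proof (rule ccontr)
    assume "\<not> ?thesis"
    then have "P (1+d)" for d by (induction d) (use P1 in auto)
    then show False using Pn assms(2) by (metis le_add_diff_inverse)
  qed
  then obtain k where k: "1 \<le> k" "P k" "\<not> P (k+1)" by blast
  have "(k+2)^2 \<le> bump (k+1) (goodstein k m)" using lemA[of "k+1" "goodstein k m"] k
    by (simp add: P_def)
  then have "(k+2)^2 - 1 \<le> goodstein (k+1) m" using gstep[of k m] k by simp
  moreover have "goodstein (k+1) m < (k+2)^2" using k(3) by (simp add: P_def)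
  ultimately have "goodstein (k+1) m = (k+2)^2 - 1" by simp
  define K where "K = k+1"
  have K2: "2 \<le> K" using k K_def by simp
  have gK: "goodstein K m = K*(K+1) + K" using \<open>goodstein (k+1) m = _\<close> unfolding K_def
    by (simp add: power2_eq_square algebra_simps)
  have g2K: "goodstein (K+K) m = K*(K+1+K) + (K-K)"
    using phase1[of K m K K K] gK K2 by simp
  obtain j where j: "j \<ge> K+K" "goodstein j m = 2*(j+1)"
    using phase2[rule_format, of "K+K" m K] g2K K2 by (auto simp: algebra_simps)
  have j1: "goodstein (j+1) m = 1*(j+2) + (j+1)" using drop[of j m 2] j K2 by simp
  have j2: "goodstein ((j+1)+(j+1)) m = 1*((j+1)+1+(j+1)) + ((j+1)-(j+1))"
    using phase1[of "j+1" m 1 "j+1" "j+1"] j1 by simp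
  have e2: "j+1+(j+1) = 2*j+2" by simp
  have j2': "goodstein (2*j+2) m = 1*((2*j+2)+1)" using j2[unfolded e2] by simp
  have j3': "goodstein (2*j+2+1) m = (1-1)*(2*j+2+2) + (2*j+2+1)"
    using drop[of "2*j+2" m 1, OF _ j2'] by simp
  have e3: "2*j+2+1 = 2*j+3" by simp
  have j3: "goodstein (2*j+3) m = 2*j+3" using j3'[unfolded e3] by simp
  have j4: "goodstein ((2*j+3)+t) m = (2*j+3) - t" if "t \<le> 2*j+3" for t
    using phase3[of "2*j+3" m "2*j+3" t] j3 that by simp
  have z: "goodstein (4*j+6) m = 0" using j4[of "2*j+3"] by (simp add: algebra_simps)
  have o: "goodstein (4*j+5) m = 1" using j4[of "2*j+2"] by (simp add: algebra_simps)
  have nle: "n = 4*j+6"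
  proof (rule ccontr)
    assume ne: "n \<noteq> 4*j+6"
    show False
    proof (cases "n < 4*j+6")
      case True
      then have "goodstein (n + (4*j+5-n)) m = 0" using gzero assms by blast
      then show False using o True by simp
    next
      case False
      then show False using assms(4)[rule_format, of "4*j+6"] z ne by simp
    qed
  qed
  have dg: "digits (j+1) (2*(j+1)+0) = [0, 2]" using digits_two[of "j+1" 2 0] j K2 by simp
  have dg': "digits (j+1) (goodstein j m) = [0, 2]" using dg j(2) by simp
  have u: "[0..<length [0::nat, 2]] = [0, 1]" by (simp add: upt_rec)
  have hr: "hrep_of (j+1) (goodstein j m) = HSum [(0, hrep_of (j+1) 0), (2, hrep_of (j+1) 1)]"
    apply (subst hrep_of.simps)
    unfolding dg' u by simp
  have c1: "2 \<le> j+1" using j(1) K2 by simp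
  have c2: "n = 2 * (2 * (j+1) + 1)" using nle by simp
  have c3: "hrep_of (j+1) (goodstein (j+1-1) m) = HSum [(0, hrep_of (j+1) 0), (2, hrep_of (j+1) 1)]"
    unfolding diff_add_inverse2 by (rule hr)
  show ?thesis using c1 c2 c3 by blast
qed

end
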